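(* Let $m\in\mathcal{S}(\Lambda)$. Suppose there exist $0\ne\eta\in\Lambda$, a root of unity $\zeta\ne1$, and an integer $N$ such that $(\nabla^\zeta_\eta)^Nm=0$. Then $\mathcal{A}(m)=0$.
   Context: $V$ finite-dimensional real vector space, $\Lambda\subset V$ full-rank lattice, $\Lambda_{\mathbb{Q}}=\Lambda\otimes\mathbb{Q}$. Rational polyhedron: finite intersection of half-spaces $\{v:\langle a,v\rangle\ge c\}$, $a\in\mathrm{Hom}(\Lambda,\mathbb{Z})\otimes\mathbb{Q}$, $c\in\mathbb{Q}$. $C_{P,\sigma}=\{(t,tv+\sigma):t>0,v\in P\}$ and $[C_{P,\sigma}]$ its indicator restricted to $\mathbb{Z}\oplus\Lambda$. Quasi-polynomials: algebra generated by polynomials and periodic functions. $\mathcal{S}(\Lambda)$: functions on $\mathbb{Z}\oplus\Lambda$ of the form $\sum_{P\in\mathcal{P}}\sum_{\sigma\in\Sigma_P}q_{P,\sigma}[C_{P,\sigma}]$, $\mathcal{P}$ rational polyhedra, $\Sigma_P\subset\Lambda_{\mathbb{Q}}$, $q_{P,\sigma}$ quasi-polynomial, $\{P+[0,1]\sigma\}$ locally finite in $V$. $(\nabla^\zeta_\eta m)(k,\lambda)=m(k,\lambda)-\zeta m(k,\lambda-\eta)$. $\Theta(m;k)=\sum_\lambda m(k,\lambda)\delta_{\lambda/k}$, $k\in\mathbb{Z}_{>0}$; $\mathcal{A}(m)$ is its asymptotic expansion as $k\to\infty$, and $\mathcal{A}(m)=0$ means all coefficients vanish, equivalently $\langle\Theta(m;k),\varphi\rangle=o(k^{-N'})$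 for every $\varphi\in C^\infty_c(V)$ and every $N'$. *)

theory Defs
  imports "HOL-Analysis.Analysis"
begin

definition full_lattice :: "'a::euclidean_space set \<Rightarrow> bool" where
  "full_lattice \<Lambda> \<longleftrightarrow> (\<exists>B. independent B \<and> span B = UNIV \<and>
      \<Lambda> = {(\<Sum>b\<in>B. of_int (c b) *\<^sub>R b) | c. True})"

text \<open>Lambda tensor Q, viewed inside V.\<close>
definition lattice_rat :: "'a::euclidean_space set \<Rightarrow> 'a set" where
  "lattice_rat \<Lambda> = {v. \<exists>n::nat. n > 0 \<and> of_nat n *\<^sub>R v \<in> \<Lambda>}"

text \<open>Elements of Hom(Lambda,Z) tensor Q, represented by vectors a acting through the inner product:
  exactly the linear functionals that are rational-valued on Lambda.\<close>
definition rat_covector :: "'a::euclidean_space set \<Rightarrow> 'a \<Rightarrow> bool" where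
  "rat_covector \<Lambda> a \<longleftrightarrow> (\<forall>l\<in>\<Lambda>. a \<bullet> l \<in> \<rat>)"

definition rat_polyhedron :: "'a::euclidean_space set \<Rightarrow> 'a set \<Rightarrow> bool" where
  "rat_polyhedron \<Lambda> P \<longleftrightarrow> (\<exists>F. finite F \<and>
      (\<forall>(a,c)\<in>F. rat_covector \<Lambda> a \<and> c \<in> \<rat>) \<and>
      P = {v. \<forall>(a,c)\<in>F. a \<bullet> v \<ge> c})"

definition in_cone :: "'a::euclidean_space set \<Rightarrow> 'a \<Rightarrow> int \<Rightarrow> 'a \<Rightarrow> bool" where
  "in_cone P \<sigma> k l \<longleftrightarrow> (\<exists>t v. t > 0 \<and> v \<in> P \<and> real_of_int k = t \<and> l = t *\<^sub>R v + \<sigma>)"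

text \<open>Periodic functions on Z + Lambda (invariant under a finite-index sublattice,
  which always contains p(Z + Lambda) for some integer p > 0).\<close>
definition periodic_on_lattice :: "'a::euclidean_space set \<Rightarrow> (int \<Rightarrow> 'a \<Rightarrow> complex) \<Rightarrow> bool" where
  "periodic_on_lattice \<Lambda> f \<longleftrightarrow> (\<exists>p::int. p > 0 \<and>
     (\<forall>k l j \<mu>. l \<in> \<Lambda> \<longrightarrow> \<mu> \<in> \<Lambda> \<longrightarrow>
        f (k + p * j) (l + of_int p *\<^sub>R \<mu>) = f k l))"

inductive quasi_poly :: "'a::euclidean_space set \<Rightarrow> (int \<Rightarrow> 'a \<Rightarrow> complex) \<Rightarrow> bool"
  for \<Lambda> where
  periodic: "periodic_on_lattice \<Lambda> f \<Longrightarrow> quasi_poly \<Lambda> f"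
| coord_k: "quasi_poly \<Lambda> (\<lambda>k l. of_int k)"
| coord_lin: "quasi_poly \<Lambda> (\<lambda>k l. complex_of_real (a \<bullet> l))"
| add: "quasi_poly \<Lambda> f \<Longrightarrow> quasi_poly \<Lambda> g \<Longrightarrow> quasi_poly \<Lambda> (\<lambda>k l. f k l + g k l)"
| mult: "quasi_poly \<Lambda> f \<Longrightarrow> quasi_poly \<Lambda> g \<Longrightarrow> quasi_poly \<Lambda> (\<lambda>k l. f k l * g k l)"

text \<open>The index set I is the set of pairs (P, sigma) with P in the family
  of rational polyhedra and sigma in Sigma_P; the family (P + [0,1] sigma) indexed by I must be locally
  finite, which makes the sum finite at every point of Z + Lambda.\<close>
definition class_S :: "'a::euclidean_space set \<Rightarrow> (int \<Rightarrow> 'a \<Rightarrow> complex) \<Rightarrow> bool" where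
  "class_S \<Lambda> m \<longleftrightarrow> (\<exists>(I :: ('a set \<times> 'a) set) (q :: 'a set \<times> 'a \<Rightarrow> int \<Rightarrow> 'a \<Rightarrow> complex).
      (\<forall>(P,\<sigma>)\<in>I. rat_polyhedron \<Lambda> P \<and> \<sigma> \<in> lattice_rat \<Lambda> \<and> quasi_poly \<Lambda> (q (P,\<sigma>))) \<and>
      (\<forall>x. \<exists>U. open U \<and> x \<in> U \<and>
          finite {(P,\<sigma>)\<in>I. U \<inter> {p + t *\<^sub>R \<sigma> | p t. p \<in> P \<and> t \<in> {0..1}} \<noteq> {}}) \<and>
      (\<forall>k. \<forall>l\<in>\<Lambda>. m k l = (\<Sum>(P,\<sigma>)\<in>{(P,\<sigma>)\<in>I. in_cone P \<sigma> k l}. q (P,\<sigma>) k l)))"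

definition nabla :: "complex \<Rightarrow> 'a::euclidean_space \<Rightarrow> (int \<Rightarrow> 'a \<Rightarrow> complex) \<Rightarrow> (int \<Rightarrow> 'a \<Rightarrow> complex)" where
  "nabla \<zeta> \<eta> m = (\<lambda>k l. m k l - \<zeta> * m k (l - \<eta>))"

coinductive smooth_fun :: "('a::real_normed_vector \<Rightarrow> 'b::real_normed_vector) \<Rightarrow> bool" where
  "(\<forall>x. f differentiable (at x)) \<Longrightarrow> (\<forall>u. smooth_fun (\<lambda>x. frechet_derivative f (at x) u))
     \<Longrightarrow> smooth_fun f"

definition test_function :: "('a::euclidean_space \<Rightarrow> complex) \<Rightarrow> bool" where
  "test_function \<phi> \<longleftrightarrow> smooth_fun \<phi> \<and> (\<exists>K. compact K \<and> (\<forall>x. x \<notin> K \<longrightarrow> \<phi> x = 0))"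

text \<open>Pairing of Theta(m;k) = sum_l m(k,l) delta_{l/k} with a test function.\<close>
definition Theta_pair :: "'a::euclidean_space set \<Rightarrow> (int \<Rightarrow> 'a \<Rightarrow> complex) \<Rightarrow> ('a \<Rightarrow> complex) \<Rightarrow> nat \<Rightarrow> complex" where
  "Theta_pair \<Lambda> m \<phi> k = (\<Sum>l\<in>{l\<in>\<Lambda>. \<phi> ((1 / real k) *\<^sub>R l) \<noteq> 0}. m (int k) l * \<phi> ((1 / real k) *\<^sub>R l))"

text \<open>A(m) = 0: all coefficients of the asymptotic expansion vanish, i.e. the pairing is
  o(k^{-N'}) for every test function and every N'.\<close>
definition asymp_zero :: "'a::euclidean_space set \<Rightarrow> (int \<Rightarrow> 'a \<Rightarrow> complex) \<Rightarrow> bool" where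
  "asymp_zero \<Lambda> m \<longleftrightarrow> (\<forall>\<phi>. test_function \<phi> \<longrightarrow> (\<forall>N'::nat.
      ((\<lambda>k. of_nat k ^ N' * Theta_pair \<Lambda> m \<phi> k) \<longlongrightarrow> 0) sequentially))"

end

theory Submission
  imports Defs "HOL-Computational_Algebra.Polynomial"
begin

definition sop :: "'a::real_vector \<Rightarrow> complex poly \<Rightarrow> ('a \<Rightarrow> complex) \<Rightarrow> 'a \<Rightarrow> complex" where
  "sop h p g x = (\<Sum>i\<le>degree p. coeff p i * g (x + of_nat i *\<^sub>R h))"

lemma sop_ext: "degree p \<le> n \<Longrightarrow> sop h p g x = (\<Sum>i\<le>n. coeff p i * g (x + of_nat i *\<^sub>R h))"
  unfolding sop_def by (rule sum.mono_neutral_left) (auto simp: coeff_eq_0)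

lemma sop_add: "sop h (p + q) g x = sop h p g x + sop h q g x"
proof -
  let ?n = "max (degree p) (degree q)"
  have "degree (p+q) \<le> ?n" by (rule degree_add_le) auto
  then show ?thesis
    by (simp add: sop_ext[of _ ?n] sop_ext[of p ?n] sop_ext[of q ?n] sum.distrib algebra_simps)
qed

lemma sop_smult: "sop h (smult a q) g x = a * sop h q g x"
  using sop_ext[of "smult a q" "degree q"] by (simp add: sop_def sum_distrib_left mult.assoc)

lemma sop_pCons: "sop h (pCons a p) g x = a * g x + sop h p g (x + h)"
proof -
  have "sop h (pCons a p) g x = (\<Sum>i\<le>Suc (degree p). coeff (pCons a p) i * g (x + of_nat i *\<^sub>R h))"
    by (rule sop_ext) (simp add: degree_pCons_le)
  also have "\<dots> = a * g x + (\<Sum>i\<le>degree p. coeff p i * g (x + h + of_nat i *\<^sub>R h))"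
    by (subst sum.atMost_Suc_shift) (simp add: algebra_simps)
  finally show ?thesis by (simp add: sop_def)
qed

lemma sop_0[simp]: "sop h 0 g x = 0"
  by (simp add: sop_def)

lemma sop_mult: "sop h (p * q) g x = sop h p (sop h q g) x"
proof (induction p arbitrary: x)
  case 0
  then show ?case by simp
next
  case (pCons a p)
  then show ?case by (simp add: sop_add sop_smult sop_pCons)
qed

lemma sop_1[simp]: "sop h 1 g x = g x"
  by (simp add: sop_def)

lemma sop_lin: "sop h [:a, b:] g x = a * g x + b * g (x + h)"
  by (simp add: sop_pCons)

lemma sop_cong: "(\<And>y. g y = g' y) \<Longrightarrow> sop h p g x = sop h p g' x"
  by (simp add: sop_def)

lemma lat_basis:
  assumes "full_lattice \<Lambda>"
  obtains B where "finite B" "independent B" "span B = UNIV"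
    "\<Lambda> = {(\<Sum>b\<in>B. of_int (c b) *\<^sub>R b) | c. True}"
proof -
  from assms obtain B where B: "independent B" "span B = UNIV"
    "\<Lambda> = {(\<Sum>b\<in>B. of_int (c b) *\<^sub>R b) | c. True}"
    unfolding full_lattice_def by blast
  have "finite B" using independent_bound[OF B(1)] by blast
  from that[OF this B] show ?thesis .
qed

lemma lat_diff:
  assumes "full_lattice \<Lambda>" "l \<in> \<Lambda>" "\<mu> \<in> \<Lambda>"
  shows "l - \<mu> \<in> \<Lambda>"
proof -
  obtain B where B: "\<Lambda> = {(\<Sum>b\<in>B. of_int (c b) *\<^sub>R b) | c. True}"
    by (rule lat_basis[OF assms(1)])
  obtain c c' where "l = (\<Sum>b\<in>B. of_int (c b) *\<^sub>R b)" "\<mu> = (\<Sum>b\<in>B. of_int (c' b) *\<^sub>R b)"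
    using assms B by auto
  define d where "d = (\<lambda>b. c b - c' b)"
  have e: "l - \<mu> = (\<Sum>b\<in>B. of_int (d b) *\<^sub>R b)"
    unfolding d_def using \<open>l = _\<close> \<open>\<mu> = _\<close> by (simp add: sum_subtractf scaleR_diff_left)
  show ?thesis unfolding B mem_Collect_eq by (rule exI[of _ d]) (simp add: e)
qed

lemma lat_zero: "full_lattice \<Lambda> \<Longrightarrow> 0 \<in> \<Lambda>"
  by (auto simp: full_lattice_def intro!: exI[of _ "\<lambda>_. 0"])

lemma lat_neg: "full_lattice \<Lambda> \<Longrightarrow> l \<in> \<Lambda> \<Longrightarrow> - l \<in> \<Lambda>"
  using lat_diff[of \<Lambda> 0 l] lat_zero by auto

lemma lat_add: "full_lattice \<Lambda> \<Longrightarrow> l \<in> \<Lambda> \<Longrightarrow> \<mu> \<in> \<Lambda> \<Longrightarrow> l + \<mu> \<in> \<Lambda>"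
  using lat_diff[of \<Lambda> l "-\<mu>"] lat_neg by auto

lemma lat_nat: "full_lattice \<Lambda> \<Longrightarrow> l \<in> \<Lambda> \<Longrightarrow> of_nat n *\<^sub>R l \<in> \<Lambda>"
  by (induction n) (auto simp: lat_zero lat_add algebra_simps)

lemma lat_int: "full_lattice \<Lambda> \<Longrightarrow> l \<in> \<Lambda> \<Longrightarrow> of_int n *\<^sub>R l \<in> \<Lambda>"
proof (cases "n \<ge> 0")
  case True
  assume "full_lattice \<Lambda>" "l \<in> \<Lambda>"
  then show ?thesis using lat_nat[of \<Lambda> l "nat n"] True by simp
next
  case False
  assume a: "full_lattice \<Lambda>" "l \<in> \<Lambda>"
  then have "- (of_nat (nat (-n)) *\<^sub>R l) \<in> \<Lambda>" using lat_nat lat_neg by blast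
  then show ?thesis using False by simp
qed

lemma rep_coord:
  fixes B :: "'a::euclidean_space set"
  assumes "finite B" "independent B" "span B = UNIV" "b \<in> B"
  shows "representation B (\<Sum>b'\<in>B. of_int (c b') *\<^sub>R b') b = of_int (c b)"
proof -
  have "representation B (\<Sum>b'\<in>B. of_int (c b') *\<^sub>R b') b
        = (\<Sum>b'\<in>B. representation B (of_int (c b') *\<^sub>R b') b)"
    using assms by (simp add: representation_sum)
  also have "\<dots> = (\<Sum>b'\<in>B. of_int (c b') * (if b = b' then 1 else 0))"
    using assms by (intro sum.cong) (auto simp: representation_scale representation_basis)
  also have "\<dots> = (\<Sum>b'\<in>B. if b' = b then of_int (c b') else 0)"
    by (rule sum.cong) auto
  also have "\<dots> = of_int (c b)"
    using assms by (simp add: sum.delta)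
  finally show ?thesis .
qed

lemma rep_bound:
  fixes B :: "'a::euclidean_space set"
  assumes "finite B" "independent B" "span B = UNIV"
  obtains C where "C \<ge> 0" "\<And>v b. \<bar>representation B v b\<bar> \<le> C * norm v"
proof -
  define C where "C = (\<Sum>b\<in>B. \<Sum>e\<in>Basis. \<bar>representation B e b\<bar>)"
  have b: "\<bar>representation B v b\<bar> \<le> C * norm v" for v b
  proof (cases "b \<in> B")
    case False
    then have "representation B v b = 0" using representation_ne_zero by blast
    moreover have "C \<ge> 0" unfolding C_def by (intro sum_nonneg) auto
    ultimately show ?thesis by simp
  next
    case True
    have "representation B v b = representation B (\<Sum>e\<in>Basis. (v \<bullet> e) *\<^sub>R e) b"
      by (simp add: euclidean_representation)
    also have "\<dots> = (\<Sum>e\<in>Basis. (v \<bullet> e) * representation B e b)"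
      using assms by (simp add: representation_sum representation_scale)
    finally have "\<bar>representation B v b\<bar> \<le> (\<Sum>e\<in>Basis. \<bar>v \<bullet> e\<bar> * \<bar>representation B e b\<bar>)"
      using sum_abs[of "\<lambda>e. (v \<bullet> e) * representation B e b" Basis] by (simp add: abs_mult)
    also have "\<dots> \<le> (\<Sum>e\<in>Basis. norm v * \<bar>representation B e b\<bar>)"
      by (intro sum_mono mult_right_mono) (auto simp: Basis_le_norm)
    also have "\<dots> = norm v * (\<Sum>e\<in>Basis. \<bar>representation B e b\<bar>)"
      by (simp add: sum_distrib_left)
    also have "\<dots> \<le> norm v * C"
      unfolding C_def using True assms(1)
      by (intro mult_left_mono member_le_sum[where f="\<lambda>b. \<Sum>e\<in>Basis. \<bar>representation B e b\<bar>"]) (auto intro: sum_nonneg)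
    finally show ?thesis by (simp add: mult.commute)
  qed
  have "C \<ge> 0" unfolding C_def by (intro sum_nonneg) auto
  from that[OF this b] show ?thesis .
qed

lemma lat_count:
  fixes \<Lambda> :: "'a::euclidean_space set"
  assumes "full_lattice \<Lambda>"
  obtains C d where "C \<ge> 0" "\<And>r. r \<ge> 1 \<Longrightarrow> finite (\<Lambda> \<inter> cball 0 r) \<and> real (card (\<Lambda> \<inter> cball 0 r)) \<le> C * r ^ d"
proof -
  obtain B where B: "finite B" "independent B" "span B = UNIV"
    "\<Lambda> = {(\<Sum>b\<in>B. of_int (c b) *\<^sub>R b) | c. True}"
    by (rule lat_basis[OF assms])
  obtain C0 where C0: "C0 \<ge> 0" "\<And>v b. \<bar>representation B v b\<bar> \<le> C0 * norm v"
    using rep_bound[OF B(1-3)] by blast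
  have main: "finite (\<Lambda> \<inter> cball 0 r) \<and> real (card (\<Lambda> \<inter> cball 0 r)) \<le> (2*C0+3)^card B * r ^ card B"
    if r: "r \<ge> 1" for r
  proof -
    define T where "T = \<lceil>C0 * r\<rceil>"
    define S where "S = PiE B (\<lambda>_. {-T..T})"
    define F :: "('a \<Rightarrow> int) \<Rightarrow> 'a" where "F = (\<lambda>c. (\<Sum>b\<in>B. of_int (c b) *\<^sub>R b))"
    have sub: "\<Lambda> \<inter> cball 0 r \<subseteq> F ` S"
    proof
      fix l assume l: "l \<in> \<Lambda> \<inter> cball 0 r"
      then obtain c where c: "l = (\<Sum>b\<in>B. of_int (c b) *\<^sub>R b)" using B(4) by auto
      have "\<bar>c b\<bar> \<le> T" if "b \<in> B" for b
      proof -
        have "of_int (c b) = representation B l b" using rep_coord[OF B(1-3) that] c by simp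
        moreover have "C0 * norm l \<le> C0 * r" using l C0(1) by (intro mult_left_mono) auto
        ultimately have "\<bar>real_of_int (c b)\<bar> \<le> C0 * r"
          using C0(2)[of l b] by linarith
        then show ?thesis unfolding T_def by linarith
      qed
      then have "\<And>b. b \<in> B \<Longrightarrow> c b \<in> {-T..T}" by (fastforce simp: abs_le_iff)
      then have "restrict c B \<in> S" unfolding S_def by auto
      moreover have "F (restrict c B) = l" unfolding F_def c by (intro sum.cong) auto
      ultimately show "l \<in> F ` S" by blast
    qed
    have fin: "finite S" unfolding S_def using B(1) by (intro finite_PiE) auto
    have "card (\<Lambda> \<inter> cball 0 r) \<le> card (F ` S)" by (rule card_mono) (use fin sub in auto)
    also have "\<dots> \<le> card S" using fin by (rule card_image_le)
    also have "\<dots> = nat (2*T+1) ^ card B" unfolding S_def using B(1) by (simp add: card_PiE)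
    finally have "real (card (\<Lambda> \<inter> cball 0 r)) \<le> real (nat (2*T+1)) ^ card B"
      by (metis of_nat_le_iff of_nat_power)
    also have "\<dots> \<le> ((2*C0+3) * r) ^ card B"
    proof (rule power_mono)
      have "0 \<le> C0 * r" using C0(1) r by simp
      then have "T \<ge> 0" unfolding T_def by simp
      then have "real (nat (2*T+1)) = 2 * real_of_int T + 1" by simp
      also have "\<dots> \<le> 2 * (C0 * r + 1) + 1" unfolding T_def using ceiling_correct[of "C0 * r"] by (smt (verit))
      also have "\<dots> \<le> (2*C0+3) * r" using r C0(1) by (simp add: algebra_simps)
      finally show "real (nat (2*T+1)) \<le> (2*C0+3) * r" .
    qed auto
    finally show ?thesis using finite_subset[OF sub] fin by (simp add: power_mult_distrib)
  qed
  show ?thesis using main C0(1) by (intro that[of "(2*C0+3)^card B" "card B"]) auto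
qed

lemma periodic_bound:
  fixes \<Lambda> :: "'a::euclidean_space set"
  assumes "full_lattice \<Lambda>" "periodic_on_lattice \<Lambda> f"
  shows "\<exists>C. \<forall>k. \<forall>l\<in>\<Lambda>. norm (f k l) \<le> C"
proof -
  obtain B where B: "finite B" "independent B" "span B = UNIV"
    "\<Lambda> = {(\<Sum>b\<in>B. of_int (c b) *\<^sub>R b) | c. True}"
    by (rule lat_basis[OF assms(1)])
  obtain p :: int where p: "p > 0" "\<And>k l j \<mu>. l \<in> \<Lambda> \<Longrightarrow> \<mu> \<in> \<Lambda> \<Longrightarrow>
        f (k + p * j) (l + of_int p *\<^sub>R \<mu>) = f k l"
    using assms(2) unfolding periodic_on_lattice_def by blast
  define F :: "('a \<Rightarrow> int) \<Rightarrow> 'a" where "F = (\<lambda>c. (\<Sum>b\<in>B. of_int (c b) *\<^sub>R b))"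
  define V where "V = (\<lambda>(k0,c). f k0 (F c)) ` ({0..<p} \<times> PiE B (\<lambda>_. {0..<p}))"
  have finV: "finite V" unfolding V_def using B(1) by (intro finite_imageI finite_cartesian_product finite_PiE) auto
  have "norm (f k l) \<le> (\<Sum>v\<in>V. norm v)" if l: "l \<in> \<Lambda>" for k l
  proof -
    obtain c where c: "l = F c" using B(4) l unfolding F_def by auto
    define c0 where "c0 = restrict (\<lambda>b. c b mod p) B"
    have l0: "F c0 \<in> \<Lambda>" using B(4) unfolding F_def by auto
    have mu: "F (\<lambda>b. c b div p) \<in> \<Lambda>" using B(4) unfolding F_def by auto
    have mm: "\<And>x. real_of_int (c x mod p) + real_of_int p * real_of_int (c x div p) = real_of_int (c x)"
      by (metis of_int_add of_int_mult mod_mult_div_eq)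
    have "l = F c0 + of_int p *\<^sub>R F (\<lambda>b. c b div p)"
    proof -
      have "F c0 + of_int p *\<^sub>R F (\<lambda>b. c b div p) = (\<Sum>b\<in>B. of_int (c b mod p + p * (c b div p)) *\<^sub>R b)"
        unfolding F_def c0_def scaleR_sum_right sum.distrib[symmetric]
        by (rule sum.cong[OF refl]) (simp add: scaleR_add_left[symmetric] mm del: scaleR_add_left)
      also have "\<dots> = l" unfolding c F_def
      proof (rule sum.cong[OF refl])
        fix x show "of_int (c x mod p + p * (c x div p)) *\<^sub>R x = of_int (c x) *\<^sub>R x"
          by (simp only: mod_mult_div_eq)
      qed
      finally show ?thesis by simp
    qed
    moreover have "k = k mod p + p * (k div p)" by simp
    ultimately have "f k l = f (k mod p) (F c0)"
      using p(2)[OF l0 mu, of "k mod p" "k div p"] by metis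
    moreover have "f (k mod p) (F c0) \<in> V"
      unfolding V_def c0_def using p(1) by (intro image_eqI[where x="(k mod p, restrict (\<lambda>b. c b mod p) B)"]) auto
    ultimately show ?thesis using finV by (simp add: member_le_sum)
  qed
  then show ?thesis by blast
qed

lemma smooth_D: "smooth_fun f \<Longrightarrow> (\<forall>x. f differentiable (at x)) \<and> (\<forall>u. smooth_fun (\<lambda>x. frechet_derivative f (at x) u))"
  by (erule smooth_fun.cases) auto

lemma test_support:
  assumes "test_function g"
  obtains R where "R > 0" "\<And>x. norm x > R \<Longrightarrow> g x = 0"
proof -
  obtain K where K: "compact K" "\<And>x. x \<notin> K \<Longrightarrow> g x = 0" using assms unfolding test_function_def by auto
  obtain R where R: "R > 0" "\<And>x. x \<in> K \<Longrightarrow> norm x \<le> R"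
    using compact_imp_bounded[OF K(1)] bounded_pos by metis
  show ?thesis using R K by (intro that[of R]) force+
qed

lemma test_deriv:
  assumes "test_function g"
  shows "test_function (\<lambda>x. frechet_derivative g (at x) u)"
proof -
  obtain K where K: "compact K" "\<And>x. x \<notin> K \<Longrightarrow> g x = 0" using assms unfolding test_function_def by auto
  have sm: "smooth_fun g" using assms unfolding test_function_def by auto
  have "frechet_derivative g (at x) u = 0" if "x \<notin> K" for x
  proof -
    have op: "open (- K)" using compact_imp_closed[OF K(1)] by auto
    have "(g has_derivative (\<lambda>_. 0)) (at x)"
      by (rule has_derivative_transform_within_open[of "\<lambda>_. 0" "\<lambda>_. 0" _ _ "-K"])
         (use op that K(2) in auto)
    then have "frechet_derivative g (at x) = (\<lambda>_. 0)"
      by (metis frechet_derivative_at)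
    then show ?thesis by simp
  qed
  then show ?thesis using smooth_D[OF sm] K(1) unfolding test_function_def by blast
qed

lemma test_bounded:
  assumes "test_function g"
  obtains C where "\<And>x. norm (g x) \<le> C"
proof -
  obtain K where K: "compact K" "\<And>x. x \<notin> K \<Longrightarrow> g x = 0" using assms unfolding test_function_def by auto
  have sm: "smooth_fun g" using assms unfolding test_function_def by auto
  have "continuous_on K g"
    using smooth_D[OF sm] by (meson continuous_at_imp_continuous_on differentiable_imp_continuous_within)
  then have "compact (g ` K)" using K(1) compact_continuous_image by blast
  then obtain C where C: "\<And>y. y \<in> g ` K \<Longrightarrow> norm y \<le> C"
    using compact_imp_bounded bounded_iff by metis
  have "norm (g x) \<le> max C 0" for x
    using C[of "g x"] K(2)[of x] by (cases "x \<in> K") auto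
  then show ?thesis using that by blast
qed

primrec dd :: "'a::real_vector \<Rightarrow> real \<Rightarrow> nat \<Rightarrow> ('a \<Rightarrow> complex) \<Rightarrow> 'a \<Rightarrow> complex" where
  "dd h s 0 g = g"
| "dd h s (Suc M) g = (\<lambda>x. dd h s M g x - dd h s M g (x + s *\<^sub>R h))"

lemma dd_deriv:
  fixes g :: "'a::euclidean_space \<Rightarrow> complex"
  assumes "\<And>x. g differentiable (at x)"
  shows "((\<lambda>t. dd h s M g (x + t *\<^sub>R h)) has_vector_derivative
           dd h s M (\<lambda>y. frechet_derivative g (at y) h) (x + t *\<^sub>R h)) (at t)"
proof (induction M arbitrary: x)
  case 0
  have d1: "((\<lambda>t. x + t *\<^sub>R h) has_derivative (\<lambda>t. t *\<^sub>R h)) (at t)"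
    by (auto intro!: derivative_eq_intros)
  have d2: "(g has_derivative frechet_derivative g (at (x + t *\<^sub>R h))) (at (x + t *\<^sub>R h))"
    using assms frechet_derivative_works by blast
  have lin: "linear (frechet_derivative g (at (x + t *\<^sub>R h)))"
    using d2 has_derivative_linear by blast
  have "((\<lambda>t. g (x + t *\<^sub>R h)) has_derivative (\<lambda>u. frechet_derivative g (at (x + t *\<^sub>R h)) (u *\<^sub>R h))) (at t)"
    using diff_chain_at[OF d1 d2] by (simp add: o_def)
  then show ?case
    unfolding has_vector_derivative_def using lin by (simp add: linear_scale)
next
  case (Suc M)
  have e: "x + s *\<^sub>R h + t *\<^sub>R h = x + t *\<^sub>R h + s *\<^sub>R h" for t by (simp add: algebra_simps)
  show ?case
    using has_vector_derivative_diff[OF Suc[of x] Suc[of "x + s *\<^sub>R h"]] by (simp add: e)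
qed

lemma dd_bound:
  fixes g :: "'a::euclidean_space \<Rightarrow> complex"
  assumes "test_function g"
  shows "\<exists>C. \<forall>s x. s > 0 \<longrightarrow> norm (dd h s M g x) \<le> C * s ^ M"
  using assms
proof (induction M arbitrary: g)
  case 0
  then obtain C where "\<And>x. norm (g x) \<le> C" using test_bounded by metis
  then show ?case by auto
next
  case (Suc M)
  let ?g' = "\<lambda>y. frechet_derivative g (at y) h"
  obtain C where C: "\<And>s x. s > 0 \<Longrightarrow> norm (dd h s M ?g' x) \<le> C * s ^ M"
    using Suc.IH[OF test_deriv[OF Suc.prems]] by blast
  have diff: "\<And>x. g differentiable (at x)"
    using Suc.prems smooth_D unfolding test_function_def by blast
  have "norm (dd h s (Suc M) g x) \<le> C * s ^ Suc M" if sp: "s > 0" for s x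
  proof -
    let ?G = "\<lambda>t. dd h s M g (x + t *\<^sub>R h)"
    have der: "\<And>t. (?G has_vector_derivative dd h s M ?g' (x + t *\<^sub>R h)) (at t)"
      using dd_deriv[OF diff] by blast
    have cont: "continuous_on {0..s} ?G"
      using der by (meson continuous_at_imp_continuous_on has_vector_derivative_continuous)
    obtain t where "t \<in> {0<..<s}" and
      n: "norm (?G s - ?G 0) \<le> norm ((s - 0) *\<^sub>R dd h s M ?g' (x + t *\<^sub>R h))"
      using mvt_general[OF sp cont, of "\<lambda>t u. u *\<^sub>R dd h s M ?g' (x + t *\<^sub>R h)"] der
      unfolding has_vector_derivative_def by blast
    have "norm (dd h s (Suc M) g x) = norm (?G 0 - ?G s)" by simp
    also have "\<dots> \<le> s * norm (dd h s M ?g' (x + t *\<^sub>R h))"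
      using n sp by (simp add: norm_minus_commute)
    also have "\<dots> \<le> s * (C * s ^ M)"
      using C[OF sp] sp by (intro mult_left_mono) auto
    finally show ?thesis by (simp add: algebra_simps)
  qed
  then show ?case by blast
qed

lemma qp_bound:
  fixes \<Lambda> :: "'a::euclidean_space set"
  assumes lat: "full_lattice \<Lambda>" and "quasi_poly \<Lambda> f"
  shows "\<exists>C D. C \<ge> 0 \<and> (\<forall>k. \<forall>l\<in>\<Lambda>. norm (f k l) \<le> C * (1 + \<bar>real_of_int k\<bar> + norm l) ^ D)"
  using assms(2)
proof (induction rule: quasi_poly.induct)
  case (periodic f)
  obtain C where "\<forall>k. \<forall>l\<in>\<Lambda>. norm (f k l) \<le> C" using periodic_bound[OF lat periodic] by blast
  then show ?case by (intro exI[of _ "max C 0"] exI[of _ 0]) (auto intro: order.trans[OF _ max.cobounded1])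
next
  case coord_k
  show ?case by (intro exI[of _ 1] exI[of _ 1]) auto
next
  case (coord_lin a)
  have "norm (complex_of_real (a \<bullet> l)) \<le> norm a * (1 + \<bar>real_of_int k\<bar> + norm l) ^ 1" for k l
  proof -
    have "norm (complex_of_real (a \<bullet> l)) = \<bar>a \<bullet> l\<bar>" by simp
    also have "\<dots> \<le> norm a * norm l" by (rule Cauchy_Schwarz_ineq2)
    also have "\<dots> \<le> norm a * (1 + \<bar>real_of_int k\<bar> + norm l) ^ 1" by (intro mult_left_mono) auto
    finally show ?thesis .
  qed
  then show ?case by (intro exI[of _ "norm a"] exI[of _ 1]) auto
next
  case (add f g)
  then obtain C1 D1 C2 D2 where 1: "C1 \<ge> 0" "\<forall>k. \<forall>l\<in>\<Lambda>. norm (f k l) \<le> C1 * (1 + \<bar>real_of_int k\<bar> + norm l) ^ D1"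
    and 2: "C2 \<ge> 0" "\<forall>k. \<forall>l\<in>\<Lambda>. norm (g k l) \<le> C2 * (1 + \<bar>real_of_int k\<bar> + norm l) ^ D2" by blast
  have "norm (f k l + g k l) \<le> (C1 + C2) * (1 + \<bar>real_of_int k\<bar> + norm l) ^ (D1 + D2)" if l: "l \<in> \<Lambda>" for k l
  proof -
    define X where "X = 1 + \<bar>real_of_int k\<bar> + norm l"
    have X: "X \<ge> 1" unfolding X_def by simp
    have "norm (f k l + g k l) \<le> C1 * X ^ D1 + C2 * X ^ D2"
      using 1(2) 2(2) l unfolding X_def by (meson add_mono norm_triangle_le)
    also have "\<dots> \<le> C1 * X ^ (D1 + D2) + C2 * X ^ (D1 + D2)"
      using X 1(1) 2(1) by (intro add_mono mult_left_mono power_increasing) auto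
    finally show ?thesis unfolding X_def by (simp add: algebra_simps)
  qed
  then show ?case using 1(1) 2(1) by (intro exI[of _ "C1 + C2"] exI[of _ "D1 + D2"]) auto
next
  case (mult f g)
  then obtain C1 D1 C2 D2 where 1: "C1 \<ge> 0" "\<forall>k. \<forall>l\<in>\<Lambda>. norm (f k l) \<le> C1 * (1 + \<bar>real_of_int k\<bar> + norm l) ^ D1"
    and 2: "C2 \<ge> 0" "\<forall>k. \<forall>l\<in>\<Lambda>. norm (g k l) \<le> C2 * (1 + \<bar>real_of_int k\<bar> + norm l) ^ D2" by blast
  have "norm (f k l * g k l) \<le> (C1 * C2) * (1 + \<bar>real_of_int k\<bar> + norm l) ^ (D1 + D2)" if l: "l \<in> \<Lambda>" for k l
  proof -
    have "norm (f k l * g k l) = norm (f k l) * norm (g k l)" by (simp add: norm_mult)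
    also have "\<dots> \<le> (C1 * (1 + \<bar>real_of_int k\<bar> + norm l) ^ D1) * (C2 * (1 + \<bar>real_of_int k\<bar> + norm l) ^ D2)"
      using 1 2 l by (intro mult_mono) auto
    finally show ?thesis by (simp add: algebra_simps power_add)
  qed
  then show ?case using 1(1) 2(1) by (intro exI[of _ "C1 * C2"] exI[of _ "D1 + D2"]) auto
qed

lemma m_bound:
  fixes \<Lambda> :: "'a::euclidean_space set"
  assumes lat: "full_lattice \<Lambda>" and cs: "class_S \<Lambda> m" and R: "R > 0"
  shows "\<exists>C D. \<forall>k::nat. k \<ge> 1 \<longrightarrow> (\<forall>l\<in>\<Lambda>. norm l \<le> real k * R \<longrightarrow> norm (m (int k) l) \<le> C * real k ^ D)"
proof -
  obtain I q where Iq: "\<forall>(P,\<sigma>)\<in>I. rat_polyhedron \<Lambda> P \<and> \<sigma> \<in> lattice_rat \<Lambda> \<and> quasi_poly \<Lambda> (q (P,\<sigma>))"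
    and lf: "\<forall>x. \<exists>U. open U \<and> x \<in> U \<and>
          finite {(P,\<sigma>)\<in>I. U \<inter> {p + t *\<^sub>R \<sigma> | p t. p \<in> P \<and> t \<in> {0..1}} \<noteq> {}}"
    and meq: "\<forall>k. \<forall>l\<in>\<Lambda>. m k l = (\<Sum>(P,\<sigma>)\<in>{(P,\<sigma>)\<in>I. in_cone P \<sigma> k l}. q (P,\<sigma>) k l)"
    using cs unfolding class_S_def by blast
  define JJ where "JJ U = {(P,\<sigma>)\<in>I. U \<inter> {p + t *\<^sub>R \<sigma> | p t. p \<in> P \<and> t \<in> {0..1}} \<noteq> {}}" for U
  define \<T> where "\<T> = {U. open U \<and> finite (JJ U)}"
  have cov: "cball (0::'a) R \<subseteq> \<Union>\<T>"
  proof
    fix x :: 'a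
    obtain U where "open U" "x \<in> U" "finite (JJ U)" using lf unfolding JJ_def by blast
    then show "x \<in> \<Union>\<T>" unfolding \<T>_def by blast
  qed
  have opn: "\<And>B. B \<in> \<T> \<Longrightarrow> open B" unfolding \<T>_def by blast
  obtain \<T>' where T': "\<T>' \<subseteq> \<T>" "finite \<T>'" "cball 0 R \<subseteq> \<Union>\<T>'"
    by (rule compactE[OF compact_cball cov opn])
  define J where "J = (\<Union>U\<in>\<T>'. JJ U)"
  have finJ: "finite J" unfolding J_def using T' unfolding \<T>_def by auto
  have JI: "J \<subseteq> I" unfolding J_def JJ_def by auto
  have sub: "{(P,\<sigma>)\<in>I. in_cone P \<sigma> (int k) l} \<subseteq> J"
    if k: "k \<ge> 1" and l: "norm l \<le> real k * R" for k :: nat and l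
  proof safe
    fix P \<sigma> assume i: "(P,\<sigma>) \<in> I" and ic: "in_cone P \<sigma> (int k) l"
    then obtain t v where tv: "t > 0" "v \<in> P" "real_of_int (int k) = t" "l = t *\<^sub>R v + \<sigma>"
      unfolding in_cone_def by blast
    define x where "x = (1 / real k) *\<^sub>R l"
    have kpos: "real k > 0" using k by simp
    have "norm x \<le> R" unfolding x_def using l kpos by (simp add: divide_le_eq mult.commute)
    then have "x \<in> cball 0 R" by simp
    then obtain U where U: "U \<in> \<T>'" "x \<in> U" using T'(3) by blast
    have "x = v + (1 / real k) *\<^sub>R \<sigma>" unfolding x_def tv(4) using tv(3) kpos by (simp add: scaleR_add_right)
    moreover have "1 / real k \<in> {0..1}" using k by simp
    ultimately have "x \<in> {p + t *\<^sub>R \<sigma> | p t. p \<in> P \<and> t \<in> {0..1}}" using tv(2) by blast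
    then have "(P,\<sigma>) \<in> JJ U" unfolding JJ_def using i U(2) by blast
    then show "(P,\<sigma>) \<in> J" unfolding J_def using U(1) by blast
  qed
  have "\<forall>i\<in>J. \<exists>C D. C \<ge> 0 \<and> (\<forall>k. \<forall>l\<in>\<Lambda>. norm (q i k l) \<le> C * (1 + \<bar>real_of_int k\<bar> + norm l) ^ D)"
  proof
    fix i assume "i \<in> J"
    then have "quasi_poly \<Lambda> (q i)" using JI Iq by auto
    then show "\<exists>C D. C \<ge> 0 \<and> (\<forall>k. \<forall>l\<in>\<Lambda>. norm (q i k l) \<le> C * (1 + \<bar>real_of_int k\<bar> + norm l) ^ D)"
      by (rule qp_bound[OF lat])
  qed
  then obtain Cf where "\<forall>i\<in>J. \<exists>D. Cf i \<ge> 0 \<and> (\<forall>k. \<forall>l\<in>\<Lambda>. norm (q i k l) \<le> Cf i * (1 + \<bar>real_of_int k\<bar> + norm l) ^ D)"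
    by (rule bchoice[elim_format]) blast
  then obtain Df where CD: "\<forall>i\<in>J. Cf i \<ge> 0 \<and> (\<forall>k. \<forall>l\<in>\<Lambda>. norm (q i k l) \<le> Cf i * (1 + \<bar>real_of_int k\<bar> + norm l) ^ Df i)"
    by (rule bchoice[elim_format]) blast
  define D where "D = (\<Sum>i\<in>J. Df i)"
  define C where "C = (\<Sum>i\<in>J. Cf i * (2 + R) ^ Df i)"
  have "norm (m (int k) l) \<le> C * real k ^ D"
    if k: "k \<ge> 1" and l: "l \<in> \<Lambda>" and ln: "norm l \<le> real k * R" for k :: nat and l
  proof -
    let ?S = "{(P,\<sigma>)\<in>I. in_cone P \<sigma> (int k) l}"
    have SJ: "?S \<subseteq> J" using sub[OF k ln] .
    have X: "1 + \<bar>real_of_int (int k)\<bar> + norm l \<le> real k * (2 + R)"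
      using k ln by (simp add: algebra_simps)
    have "m (int k) l = (\<Sum>i\<in>?S. q i (int k) l)"
      using meq l by (simp add: case_prod_unfold)
    then have "norm (m (int k) l) \<le> (\<Sum>i\<in>?S. norm (q i (int k) l))"
      by (simp add: norm_sum)
    also have "\<dots> \<le> (\<Sum>i\<in>J. norm (q i (int k) l))"
      by (rule sum_mono2[OF finJ SJ]) auto
    also have "\<dots> \<le> (\<Sum>i\<in>J. Cf i * (2 + R) ^ Df i * real k ^ D)"
    proof (rule sum_mono)
      fix i assume i: "i \<in> J"
      have "norm (q i (int k) l) \<le> Cf i * (1 + \<bar>real_of_int (int k)\<bar> + norm l) ^ Df i"
        using CD i l by blast
      also have "\<dots> \<le> Cf i * (real k * (2 + R)) ^ Df i"
        using CD i X by (intro mult_left_mono power_mono) auto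
      also have "\<dots> = Cf i * (2 + R) ^ Df i * real k ^ Df i"
        by (simp add: power_mult_distrib)
      also have "\<dots> \<le> Cf i * (2 + R) ^ Df i * real k ^ D"
        using CD i k R unfolding D_def
        by (intro mult_left_mono power_increasing member_le_sum finJ) auto
      finally show "norm (q i (int k) l) \<le> Cf i * (2 + R) ^ Df i * real k ^ D" .
    qed
    also have "\<dots> = C * real k ^ D" unfolding C_def by (simp add: sum_distrib_right)
    finally show ?thesis .
  qed
  then show ?thesis by blast
qed

lemma split_one:
  fixes x y :: "'r::comm_ring_1"
  assumes "x + y = 1"
  shows "\<exists>A B. A * x ^ N + B * y ^ M = 1"
proof -
  let ?n = "N + M"
  let ?t = "\<lambda>k. of_nat (?n choose k) * x ^ k * y ^ (?n - k)"
  let ?S1 = "(\<Sum>k<N. of_nat (?n choose k) * x ^ k * y ^ (N - k))"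
  let ?S2 = "(\<Sum>k\<in>{N..?n}. of_nat (?n choose k) * x ^ (k - N) * y ^ (?n - k))"
  have "1 = (x + y) ^ ?n" using assms by simp
  also have "\<dots> = (\<Sum>k\<le>?n. ?t k)" by (rule binomial_ring)
  also have "{..?n} = {..<N} \<union> {N..?n}" by auto
  also have "sum ?t ({..<N} \<union> {N..?n}) = sum ?t {..<N} + sum ?t {N..?n}"
    by (rule sum.union_disjoint) auto
  also have "sum ?t {..<N} = (\<Sum>k<N. of_nat (?n choose k) * x ^ k * y ^ (N - k)) * y ^ M"
    unfolding sum_distrib_right
  proof (rule sum.cong[OF refl])
    fix k assume "k \<in> {..<N}"
    then have "?n - k = (N - k) + M" by auto
    then show "?t k = of_nat (?n choose k) * x ^ k * y ^ (N - k) * y ^ M"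
      by (simp add: power_add mult.assoc)
  qed
  also have "sum ?t {N..?n} = (\<Sum>k\<in>{N..?n}. of_nat (?n choose k) * x ^ (k - N) * y ^ (?n - k)) * x ^ N"
    unfolding sum_distrib_right
  proof (rule sum.cong[OF refl])
    fix k assume "k \<in> {N..?n}"
    then have "k = (k - N) + N" by auto
    then have "x ^ k = x ^ (k - N) * x ^ N" by (metis power_add)
    then show "?t k = of_nat (?n choose k) * x ^ (k - N) * y ^ (?n - k) * x ^ N"
      by (simp add: ac_simps)
  qed
  finally have e: "1 = ?S1 * y ^ M + ?S2 * x ^ N" .
  show ?thesis
    by (rule exI[of _ ?S2], rule exI[of _ ?S1], subst add.commute, rule e[symmetric])
qed

lemma poly_bezout:
  fixes \<zeta> :: complex
  assumes z1: "\<zeta> \<noteq> 1" and z0: "\<zeta> \<noteq> 0"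
  shows "\<exists>A B. A * [:1, -\<zeta>:] ^ N + B * [:1, -1:] ^ M = 1 \<and> degree B \<le> N"
proof -
  define c where "c = 1 / (1 - \<zeta>)"
  define x where "x = smult c [:1, -\<zeta>:]"
  define y where "y = smult (- \<zeta> * c) [:1, -1:]"
  have "x + y = [:c * (1 - \<zeta>), 0:]" unfolding x_def y_def by (simp add: algebra_simps)
  also have "c * (1 - \<zeta>) = 1" unfolding c_def using z1 by simp
  finally have "x + y = 1" by (simp add: one_pCons)
  then obtain A0 B0 where AB0: "A0 * x ^ N + B0 * y ^ M = 1" using split_one by blast
  define A where "A = smult (c ^ N) A0"
  define B where "B = smult ((- \<zeta> * c) ^ M) B0"
  have AB: "A * [:1, -\<zeta>:] ^ N + B * [:1, -1:] ^ M = 1"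
  proof -
    have "A0 * x ^ N = A * [:1, -\<zeta>:] ^ N" unfolding A_def x_def
      by (simp only: smult_power mult_smult_right mult_smult_left)
    moreover have "B0 * y ^ M = B * [:1, -1:] ^ M" unfolding B_def y_def
      by (simp only: smult_power mult_smult_right mult_smult_left)
    ultimately show ?thesis using AB0 by simp
  qed
  let ?u = "[:1, -\<zeta>:] ^ N"
  have u0: "?u \<noteq> 0" by simp
  have du: "degree ?u = N" using z0 by (simp add: degree_power_eq)
  define B' where "B' = B mod ?u"
  define A' where "A' = A + (B div ?u) * [:1, -1:] ^ M"
  have "A' * ?u + B' * [:1, -1:] ^ M = A * ?u + (B div ?u * ?u + B mod ?u) * [:1, -1:] ^ M"
    unfolding A'_def B'_def by algebra
  also have "\<dots> = A * ?u + B * [:1, -1:] ^ M" by (simp only: div_mult_mod_eq)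
  also have "\<dots> = 1" using AB .
  finally have 1: "A' * ?u + B' * [:1, -1:] ^ M = 1" .
  have "degree B' \<le> N" using degree_mod_less[OF u0, of B] du unfolding B'_def by auto
  with 1 show ?thesis by blast
qed

lemma nabla_sop:
  "(nabla \<zeta> \<eta> ^^ N) m k l = sop (-\<eta>) ([:1, -\<zeta>:] ^ N) (m k) l"
proof (induction N arbitrary: l)
  case 0
  then show ?case by simp
next
  case (Suc N)
  have "(nabla \<zeta> \<eta> ^^ Suc N) m k l = (nabla \<zeta> \<eta> ^^ N) m k l - \<zeta> * (nabla \<zeta> \<eta> ^^ N) m k (l - \<eta>)"
    by (simp add: nabla_def)
  also have "\<dots> = sop (-\<eta>) [:1, -\<zeta>:] (sop (-\<eta>) ([:1, -\<zeta>:] ^ N) (m k)) l"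
    using Suc by (simp add: sop_lin)
  also have "\<dots> = sop (-\<eta>) ([:1, -\<zeta>:] ^ Suc N) (m k) l"
    by (simp only: power_Suc sop_mult)
  finally show ?case .
qed

lemma sop_vpow:
  "sop h ([:1, -1:] ^ M) (\<lambda>y. g (c *\<^sub>R y)) l = dd h c M g (c *\<^sub>R l)"
proof (induction M arbitrary: l)
  case 0
  then show ?case by simp
next
  case (Suc M)
  have "sop h ([:1, -1:] ^ Suc M) (\<lambda>y. g (c *\<^sub>R y)) l = sop h [:1, -1:] (sop h ([:1, -1:] ^ M) (\<lambda>y. g (c *\<^sub>R y))) l"
    by (simp only: power_Suc sop_mult)
  also have "\<dots> = dd h c M g (c *\<^sub>R l) - dd h c M g (c *\<^sub>R (l + h))"
    by (simp add: sop_lin Suc)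
  finally show ?case by (simp add: scaleR_add_right)
qed

lemma dd_support:
  assumes "\<And>x. norm x > R0 \<Longrightarrow> g x = 0" "s \<ge> 0"
  shows "norm x > R0 + real M * s * norm h \<Longrightarrow> dd h s M g x = 0"
proof (induction M arbitrary: x)
  case 0
  then show ?case using assms by simp
next
  case (Suc M)
  have "norm (x + s *\<^sub>R h) \<ge> norm x - s * norm h"
    using norm_triangle_ineq2[of x "- (s *\<^sub>R h)"] assms(2) by simp
  moreover have "s * norm h \<ge> 0" using assms(2) by simp
  ultimately have "norm x > R0 + real M * s * norm h" "norm (x + s *\<^sub>R h) > R0 + real M * s * norm h"
    using Suc.prems by (auto simp: algebra_simps)
  then show ?case using Suc.IH by simp
qed

lemma fs_summable:
  assumes "finite {l\<in>\<Lambda>. g l \<noteq> 0}"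
  shows "g summable_on \<Lambda>"
proof -
  have "g summable_on {l\<in>\<Lambda>. g l \<noteq> 0}" using assms by simp
  moreover have "g summable_on {l\<in>\<Lambda>. g l \<noteq> 0} \<longleftrightarrow> g summable_on \<Lambda>"
    by (rule summable_on_cong_neutral) auto
  ultimately show ?thesis by simp
qed

lemma infsum_sub:
  assumes "finite F" "F \<subseteq> \<Lambda>" "\<And>l. l \<in> \<Lambda> \<Longrightarrow> l \<notin> F \<Longrightarrow> g l = 0"
  shows "infsum g \<Lambda> = sum g F"
proof -
  have "infsum g \<Lambda> = infsum g F"
    by (rule infsum_cong_neutral) (use assms in auto)
  then show ?thesis using assms(1) by simp
qed

lemma fs_mult:
  fixes f g :: "'a \<Rightarrow> complex"
  assumes "finite {l\<in>\<Lambda>. g l \<noteq> 0}"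
  shows "finite {l\<in>\<Lambda>. f l * g l \<noteq> 0}" "finite {l\<in>\<Lambda>. g l * f l \<noteq> 0}"
   apply (rule finite_subset[OF _ assms]) apply auto[1]
  apply (rule finite_subset[OF _ assms]) apply auto[1]
  done

lemma fs_sop:
  fixes \<Lambda> :: "'a::euclidean_space set"
  assumes lat: "full_lattice \<Lambda>" and eta: "\<eta> \<in> \<Lambda>" and fin: "finite {l\<in>\<Lambda>. ch l \<noteq> 0}"
  shows "finite {l\<in>\<Lambda>. sop \<eta> p ch l \<noteq> 0}"
proof -
  have "{l\<in>\<Lambda>. sop \<eta> p ch l \<noteq> 0} \<subseteq> (\<Union>i\<in>{..degree p}. (\<lambda>y. y - of_nat i *\<^sub>R \<eta>) ` {l\<in>\<Lambda>. ch l \<noteq> 0})"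
  proof
    fix l assume l: "l \<in> {l\<in>\<Lambda>. sop \<eta> p ch l \<noteq> 0}"
    then obtain i where i: "i \<in> {..degree p}" "coeff p i * ch (l + of_nat i *\<^sub>R \<eta>) \<noteq> 0"
      unfolding sop_def by (auto elim: sum.not_neutral_contains_not_neutral)
    have "l + of_nat i *\<^sub>R \<eta> \<in> \<Lambda>" using l lat_add[OF lat] lat_nat[OF lat eta] by auto
    then have "l + of_nat i *\<^sub>R \<eta> \<in> {l\<in>\<Lambda>. ch l \<noteq> 0}" using i by auto
    then show "l \<in> (\<Union>i\<in>{..degree p}. (\<lambda>y. y - of_nat i *\<^sub>R \<eta>) ` {l\<in>\<Lambda>. ch l \<noteq> 0})"
      using i(1) by (intro UN_I[OF i(1)] image_eqI[where x="l + of_nat i *\<^sub>R \<eta>"]) auto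
  qed
  moreover have "finite (\<Union>i\<in>{..degree p}. (\<lambda>y. y - of_nat i *\<^sub>R \<eta>) ` {l\<in>\<Lambda>. ch l \<noteq> 0})"
    using fin by auto
  ultimately show ?thesis by (rule finite_subset)
qed

lemma adjoint:
  fixes \<Lambda> :: "'a::euclidean_space set"
  assumes lat: "full_lattice \<Lambda>" and eta: "\<eta> \<in> \<Lambda>"
  shows "finite {l\<in>\<Lambda>. ch l \<noteq> 0} \<Longrightarrow>
    infsum (\<lambda>l. sop (-\<eta>) p f l * ch l) \<Lambda> = infsum (\<lambda>l. f l * sop \<eta> p ch l) \<Lambda>"
proof (induction p arbitrary: ch)
  case 0
  then show ?case by simp
next
  case (pCons a p)
  note fin = pCons.prems
  define ch' where "ch' = (\<lambda>l. ch (l + \<eta>))"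
  have bij: "bij_betw (\<lambda>l. l + \<eta>) \<Lambda> \<Lambda>"
  proof (rule bij_betw_byWitness[where f'="\<lambda>l. l - \<eta>"])
    show "(\<lambda>l. l + \<eta>) ` \<Lambda> \<subseteq> \<Lambda>" using lat_add[OF lat _ eta] by auto
    show "(\<lambda>l. l - \<eta>) ` \<Lambda> \<subseteq> \<Lambda>" using lat_diff[OF lat _ eta] by auto
  qed auto
  have fin': "finite {l\<in>\<Lambda>. ch' l \<noteq> 0}"
  proof -
    have "{l\<in>\<Lambda>. ch' l \<noteq> 0} \<subseteq> (\<lambda>l. l - \<eta>) ` {l\<in>\<Lambda>. ch l \<noteq> 0}"
      unfolding ch'_def using lat_add[OF lat _ eta] by (auto intro!: image_eqI[where x="_ + \<eta>"])
    then show ?thesis using fin finite_subset by blast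
  qed
  have s1: "(\<lambda>l. a * (f l * ch l)) summable_on \<Lambda>"
    by (rule fs_summable) (rule finite_subset[OF _ fin], auto)
  have s2: "(\<lambda>l. sop (-\<eta>) p f (l - \<eta>) * ch l) summable_on \<Lambda>"
    by (rule fs_summable) (rule finite_subset[OF _ fin], auto)
  have fs3: "finite {l\<in>\<Lambda>. sop \<eta> p ch' l \<noteq> 0}" by (rule fs_sop[OF lat eta fin'])
  have s3: "(\<lambda>l. f l * sop \<eta> p ch' l) summable_on \<Lambda>"
    by (rule fs_summable) (rule finite_subset[OF _ fs3], auto)
  have shift: "sop \<eta> p ch' l = sop \<eta> p ch (l + \<eta>)" for l
    unfolding sop_def ch'_def by (simp add: algebra_simps)
  have "infsum (\<lambda>l. sop (-\<eta>) (pCons a p) f l * ch l) \<Lambda>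
      = infsum (\<lambda>l. a * (f l * ch l) + sop (-\<eta>) p f (l - \<eta>) * ch l) \<Lambda>"
    by (simp add: sop_pCons algebra_simps)
  also have "\<dots> = infsum (\<lambda>l. a * (f l * ch l)) \<Lambda> + infsum (\<lambda>l. sop (-\<eta>) p f (l - \<eta>) * ch l) \<Lambda>"
    by (rule infsum_add[OF s1 s2])
  also have "infsum (\<lambda>l. sop (-\<eta>) p f (l - \<eta>) * ch l) \<Lambda> = infsum (\<lambda>l. sop (-\<eta>) p f l * ch' l) \<Lambda>"
    using infsum_reindex_bij_betw[OF bij, of "\<lambda>l. sop (-\<eta>) p f (l - \<eta>) * ch l"]
    unfolding ch'_def by simp
  also have "\<dots> = infsum (\<lambda>l. f l * sop \<eta> p ch' l) \<Lambda>" by (rule pCons.IH[OF fin'])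
  also have "infsum (\<lambda>l. a * (f l * ch l)) \<Lambda> + infsum (\<lambda>l. f l * sop \<eta> p ch' l) \<Lambda>
      = infsum (\<lambda>l. a * (f l * ch l) + f l * sop \<eta> p ch' l) \<Lambda>"
    by (rule infsum_add[OF s1 s3, symmetric])
  also have "\<dots> = infsum (\<lambda>l. f l * sop \<eta> (pCons a p) ch l) \<Lambda>"
    by (simp add: sop_pCons shift algebra_simps)
  finally show ?case .
qed

lemma key_bound:
  fixes \<Lambda> :: "'a::euclidean_space set" and \<phi> :: "'a \<Rightarrow> complex" and k :: nat
  assumes lat: "full_lattice \<Lambda>" and eta: "\<eta> \<in> \<Lambda>"
    and ker: "\<forall>k. \<forall>l\<in>\<Lambda>. (nabla \<zeta> \<eta> ^^ N) m k l = 0"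
    and AB: "A * [:1, -\<zeta>:] ^ N + B * [:1, -1:] ^ M = 1" and degB: "degree B \<le> N"
    and R0: "\<And>x. norm x > R0 \<Longrightarrow> \<phi> x = 0" and R0pos: "R0 > 0"
    and Rdef: "R = R0 + real N * norm \<eta> + norm \<eta> + 1"
    and mb: "\<forall>l\<in>\<Lambda>. norm l \<le> real k * R \<longrightarrow> norm (m (int k) l) \<le> Cm * real k ^ Dm"
    and cnt: "finite (\<Lambda> \<inter> cball 0 (real k * R))"
    and card: "real (card (\<Lambda> \<inter> cball 0 (real k * R))) \<le> Cc * (real k * R) ^ d"
    and db: "\<And>x. norm (dd \<eta> (1 / real k) M \<phi> x) \<le> C\<phi> * (1 / real k) ^ M"
    and k: "k \<ge> 1" "M \<le> k"
  shows "norm (Theta_pair \<Lambda> m \<phi> k) \<le>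
     Cc * (real k * R) ^ d * (max Cm 0 * real k ^ Dm) * ((\<Sum>i\<le>degree B. norm (coeff B i)) * (max C\<phi> 0 * (1 / real k) ^ M))"
proof -
  have kpos: "real k > 0" using k by simp
  define F where "F = \<Lambda> \<inter> cball 0 (real k * R)"
  define \<psi> where "\<psi> = (\<lambda>l. \<phi> ((1 / real k) *\<^sub>R l))"
  have R0R: "R0 \<le> R" unfolding Rdef by simp
  have supp\<psi>: "\<psi> l = 0" if "norm l > real k * R0" for l
  proof -
    have "norm ((1 / real k) *\<^sub>R l) = norm l / real k" using kpos by simp
    also have "\<dots> > R0" using that kpos by (simp add: field_simps)
    finally show ?thesis unfolding \<psi>_def using R0 by blast
  qed
  have suppF: "{l\<in>\<Lambda>. \<psi> l \<noteq> 0} \<subseteq> F"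
  proof
    fix l assume l: "l \<in> {l\<in>\<Lambda>. \<psi> l \<noteq> 0}"
    then have "norm l \<le> real k * R0" using supp\<psi> by force
    also have "\<dots> \<le> real k * R" using R0R kpos by simp
    finally show "l \<in> F" using l unfolding F_def by auto
  qed
  have fin\<psi>: "finite {l\<in>\<Lambda>. \<psi> l \<noteq> 0}" using finite_subset[OF suppF] cnt unfolding F_def by blast
  have Th: "Theta_pair \<Lambda> m \<phi> k = infsum (\<lambda>l. m (int k) l * \<psi> l) \<Lambda>"
  proof -
    have "infsum (\<lambda>l. m (int k) l * \<psi> l) \<Lambda> = sum (\<lambda>l. m (int k) l * \<psi> l) {l\<in>\<Lambda>. \<psi> l \<noteq> 0}"
      by (rule infsum_sub) (use fin\<psi> in auto)
    then show ?thesis unfolding Theta_pair_def \<psi>_def by simp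
  qed
  let ?u = "[:1, -\<zeta>:] ^ N" and ?v = "[:1, -1:] ^ M"
  define \<chi>1 where "\<chi>1 = sop \<eta> A \<psi>"
  define G where "G = sop \<eta> ?v \<psi>"
  define \<Phi> where "\<Phi> = sop \<eta> B G"
  have fin1: "finite {l\<in>\<Lambda>. \<chi>1 l \<noteq> 0}" unfolding \<chi>1_def by (rule fs_sop[OF lat eta fin\<psi>])
  have decomp: "\<psi> l = sop \<eta> ?u \<chi>1 l + \<Phi> l" for l
  proof -
    have "\<psi> l = sop \<eta> (A * ?u + B * ?v) \<psi> l" using AB by simp
    also have "\<dots> = sop \<eta> (?u * A) \<psi> l + sop \<eta> (B * ?v) \<psi> l" by (simp add: sop_add mult.commute)
    also have "\<dots> = sop \<eta> ?u \<chi>1 l + \<Phi> l" unfolding \<chi>1_def \<Phi>_def G_def by (simp only: sop_mult)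
    finally show ?thesis .
  qed
  have finU: "finite {l\<in>\<Lambda>. sop \<eta> ?u \<chi>1 l \<noteq> 0}" by (rule fs_sop[OF lat eta fin1])
  have Gval: "G y = dd \<eta> (1 / real k) M \<phi> ((1 / real k) *\<^sub>R y)" for y
    unfolding G_def \<psi>_def by (rule sop_vpow)
  have Gsupp: "G y = 0" if "norm y > real k * (R0 + norm \<eta>)" for y
  proof -
    have "norm ((1 / real k) *\<^sub>R y) = norm y / real k" using kpos by simp
    also have "\<dots> > R0 + norm \<eta>" using that kpos by (simp add: field_simps)
    finally have a: "norm ((1 / real k) *\<^sub>R y) > R0 + norm \<eta>" .
    have "real M * (1 / real k) \<le> 1" using k kpos by (simp add: field_simps)
    then have "real M * (1 / real k) * norm \<eta> \<le> 1 * norm \<eta>" by (intro mult_right_mono) auto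
    with a have "norm ((1 / real k) *\<^sub>R y) > R0 + real M * (1 / real k) * norm \<eta>" by linarith
    then show ?thesis unfolding Gval
      using dd_support[OF R0, where s="1 / real k" and x="(1 / real k) *\<^sub>R y" and M=M and h=\<eta>] by simp
  qed
  have \<Phi>supp: "\<Phi> l = 0" if lR: "norm l > real k * R" for l
  proof -
    have "coeff B i * G (l + of_nat i *\<^sub>R \<eta>) = 0" if i: "i \<le> degree B" for i
    proof -
      have "norm (l + of_nat i *\<^sub>R \<eta>) \<ge> norm l - real i * norm \<eta>"
        using norm_triangle_ineq2[of l "- (of_nat i *\<^sub>R \<eta>)"] by simp
      moreover have "real i * norm \<eta> \<le> real N * norm \<eta>" using i degB by (intro mult_right_mono) auto
      moreover have "1 * (real N * norm \<eta>) \<le> real k * (real N * norm \<eta>)" using k by (intro mult_right_mono) auto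
      moreover have "real k * R = real k * (R0 + norm \<eta>) + real k * (real N * norm \<eta>) + real k"
        unfolding Rdef by (simp add: algebra_simps)
      ultimately have "norm (l + of_nat i *\<^sub>R \<eta>) > real k * (R0 + norm \<eta>)" using lR kpos by linarith
      then show ?thesis using Gsupp by simp
    qed
    then show ?thesis unfolding \<Phi>_def sop_def by (intro sum.neutral) auto
  qed
  have \<Phi>bound: "norm (\<Phi> l) \<le> (\<Sum>i\<le>degree B. norm (coeff B i)) * (max C\<phi> 0 * (1 / real k) ^ M)" for l
  proof -
    have "norm (\<Phi> l) \<le> (\<Sum>i\<le>degree B. norm (coeff B i * G (l + of_nat i *\<^sub>R \<eta>)))"
      unfolding \<Phi>_def sop_def by (rule norm_sum)
    also have "\<dots> \<le> (\<Sum>i\<le>degree B. norm (coeff B i) * (max C\<phi> 0 * (1 / real k) ^ M))"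
    proof (rule sum_mono)
      fix i
      have "norm (G (l + of_nat i *\<^sub>R \<eta>)) \<le> max C\<phi> 0 * (1 / real k) ^ M"
        unfolding Gval using db[of "(1 / real k) *\<^sub>R (l + of_nat i *\<^sub>R \<eta>)"] kpos
        by (smt (verit) mult_right_mono zero_le_divide_1_iff zero_le_power max.cobounded1 of_nat_0_le_iff)
      then show "norm (coeff B i * G (l + of_nat i *\<^sub>R \<eta>)) \<le> norm (coeff B i) * (max C\<phi> 0 * (1 / real k) ^ M)"
        by (simp add: norm_mult mult_left_mono)
    qed
    also have "\<dots> = (\<Sum>i\<le>degree B. norm (coeff B i)) * (max C\<phi> 0 * (1 / real k) ^ M)"
      by (simp add: sum_distrib_right)
    finally show ?thesis .
  qed
  have fin\<Phi>: "finite {l\<in>\<Lambda>. \<Phi> l \<noteq> 0}"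
    by (rule finite_subset[OF _ cnt]) (use \<Phi>supp in force)
  have s1: "(\<lambda>l. m (int k) l * sop \<eta> ?u \<chi>1 l) summable_on \<Lambda>"
    by (rule fs_summable) (rule fs_mult(1)[OF finU])
  have s2: "(\<lambda>l. m (int k) l * \<Phi> l) summable_on \<Lambda>"
    by (rule fs_summable) (rule fs_mult(1)[OF fin\<Phi>])
  have "infsum (\<lambda>l. m (int k) l * \<psi> l) \<Lambda>
      = infsum (\<lambda>l. m (int k) l * sop \<eta> ?u \<chi>1 l + m (int k) l * \<Phi> l) \<Lambda>"
    by (simp add: decomp distrib_left)
  also have "\<dots> = infsum (\<lambda>l. m (int k) l * sop \<eta> ?u \<chi>1 l) \<Lambda> + infsum (\<lambda>l. m (int k) l * \<Phi> l) \<Lambda>"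
    by (rule infsum_add[OF s1 s2])
  also have "infsum (\<lambda>l. m (int k) l * sop \<eta> ?u \<chi>1 l) \<Lambda> = infsum (\<lambda>l. sop (-\<eta>) ?u (m (int k)) l * \<chi>1 l) \<Lambda>"
    by (rule adjoint[OF lat eta fin1, symmetric])
  also have "\<dots> = 0"
  proof -
    have "sop (-\<eta>) ?u (m (int k)) l * \<chi>1 l = 0" if "l \<in> \<Lambda>" for l
      using ker that nabla_sop[where \<zeta>=\<zeta> and \<eta>=\<eta> and N=N and m=m and k="int k" and l=l] by simp
    then show ?thesis by (simp add: infsum_0)
  qed
  also have "infsum (\<lambda>l. m (int k) l * \<Phi> l) \<Lambda> = sum (\<lambda>l. m (int k) l * \<Phi> l) F"
    by (rule infsum_sub) (use cnt \<Phi>supp in \<open>auto simp: F_def\<close>)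
  finally have eq: "Theta_pair \<Lambda> m \<phi> k = sum (\<lambda>l. m (int k) l * \<Phi> l) F" using Th by simp
  have "norm (Theta_pair \<Lambda> m \<phi> k) \<le> (\<Sum>l\<in>F. norm (m (int k) l * \<Phi> l))"
    unfolding eq by (rule norm_sum)
  also have "\<dots> \<le> (\<Sum>l\<in>F. (max Cm 0 * real k ^ Dm) * ((\<Sum>i\<le>degree B. norm (coeff B i)) * (max C\<phi> 0 * (1 / real k) ^ M)))"
  proof (rule sum_mono)
    fix l assume "l \<in> F"
    then have "norm (m (int k) l) \<le> Cm * real k ^ Dm" using mb unfolding F_def by auto
    also have "\<dots> \<le> max Cm 0 * real k ^ Dm" by (intro mult_right_mono) auto
    finally show "norm (m (int k) l * \<Phi> l) \<le> (max Cm 0 * real k ^ Dm) * ((\<Sum>i\<le>degree B. norm (coeff B i)) * (max C\<phi> 0 * (1 / real k) ^ M))"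
      unfolding norm_mult using \<Phi>bound[of l] by (intro mult_mono) auto
  qed
  also have "\<dots> = real (card F) * ((max Cm 0 * real k ^ Dm) * ((\<Sum>i\<le>degree B. norm (coeff B i)) * (max C\<phi> 0 * (1 / real k) ^ M)))"
    by simp
  also have "\<dots> \<le> Cc * (real k * R) ^ d * ((max Cm 0 * real k ^ Dm) * ((\<Sum>i\<le>degree B. norm (coeff B i)) * (max C\<phi> 0 * (1 / real k) ^ M)))"
    using card unfolding F_def by (intro mult_right_mono) (auto intro!: mult_nonneg_nonneg sum_nonneg)
  finally show ?thesis by (simp add: mult.assoc)
qed

theorem proposition4p1:
  fixes \<Lambda> :: "'a::euclidean_space set"
    and m :: "int \<Rightarrow> 'a \<Rightarrow> complex"
    and \<eta> :: 'a and \<zeta> :: complex and N :: nat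
  assumes "full_lattice \<Lambda>"
    and "class_S \<Lambda> m"
    and "\<eta> \<in> \<Lambda>" and "\<eta> \<noteq> 0"
    and "\<exists>n::nat. n > 0 \<and> \<zeta> ^ n = 1" and "\<zeta> \<noteq> 1"
    and "\<forall>k. \<forall>l\<in>\<Lambda>. (nabla \<zeta> \<eta> ^^ N) m k l = 0"
  shows "asymp_zero \<Lambda> m"
proof -
  note lat = assms(1) and cs = assms(2) and eta = assms(3) and ker = assms(7)
  obtain n0 :: nat where n0: "n0 > 0" "\<zeta> ^ n0 = 1" using assms(5) by blast
  have z0: "\<zeta> \<noteq> 0"
  proof
    assume "\<zeta> = 0"
    then have "\<zeta> ^ n0 = 0" using n0(1) by simp
    then show False using n0(2) by simp
  qed
  show ?thesis unfolding asymp_zero_def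
  proof (intro allI impI)
    fix \<phi> :: "'a \<Rightarrow> complex" and N' :: nat
    assume tf: "test_function \<phi>"
    obtain R0 where R0: "R0 > 0" "\<And>x. norm x > R0 \<Longrightarrow> \<phi> x = 0"
      using test_support[OF tf] by blast
    define R where "R = R0 + real N * norm \<eta> + norm \<eta> + 1"
    have R1: "R \<ge> 1" unfolding R_def using R0(1) by simp
    then have Rpos: "R > 0" by simp
    obtain Cm Dm where mb: "\<forall>k::nat. k \<ge> 1 \<longrightarrow> (\<forall>l\<in>\<Lambda>. norm l \<le> real k * R \<longrightarrow> norm (m (int k) l) \<le> Cm * real k ^ Dm)"
      using m_bound[OF lat cs Rpos] by blast
    obtain Cc d where Cc: "Cc \<ge> 0" "\<And>r. r \<ge> 1 \<Longrightarrow> finite (\<Lambda> \<inter> cball 0 r) \<and> real (card (\<Lambda> \<inter> cball 0 r)) \<le> Cc * r ^ d"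
      using lat_count[OF lat] by blast
    define M where "M = Dm + d + N' + 1"
    obtain A B where AB: "A * [:1, -\<zeta>:] ^ N + B * [:1, -1:] ^ M = 1" "degree B \<le> N"
      using poly_bezout[OF assms(6) z0] by blast
    obtain C\<phi> where db: "\<forall>s x. s > 0 \<longrightarrow> norm (dd \<eta> s M \<phi> x) \<le> C\<phi> * s ^ M"
      using dd_bound[OF tf] by blast
    define Bs where "Bs = (\<Sum>i\<le>degree B. norm (coeff B i))"
    define K0 where "K0 = Cc * R ^ d * max Cm 0 * Bs * max C\<phi> 0"
    have bnd: "norm (of_nat k ^ N' * Theta_pair \<Lambda> m \<phi> k) \<le> K0 / real k" if k: "k \<ge> max 1 M" for k :: nat
    proof -
      have k1: "k \<ge> 1" "M \<le> k" using k by auto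
      have kpos: "real k > 0" using k1 by simp
      have kR: "1 * 1 \<le> real k * R" by (intro mult_mono) (use R1 k1 in auto)
      have mbk: "\<forall>l\<in>\<Lambda>. norm l \<le> real k * R \<longrightarrow> norm (m (int k) l) \<le> Cm * real k ^ Dm"
        using mb k1 by blast
      have cc: "finite (\<Lambda> \<inter> cball 0 (real k * R))" "real (card (\<Lambda> \<inter> cball 0 (real k * R))) \<le> Cc * (real k * R) ^ d"
        using Cc(2)[of "real k * R"] kR by auto
      have dbk: "\<And>x. norm (dd \<eta> (1 / real k) M \<phi> x) \<le> C\<phi> * (1 / real k) ^ M"
        using db kpos by simp
      have key: "norm (Theta_pair \<Lambda> m \<phi> k) \<le>
         Cc * (real k * R) ^ d * (max Cm 0 * real k ^ Dm) * (Bs * (max C\<phi> 0 * (1 / real k) ^ M))"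
        unfolding Bs_def
        by (rule key_bound[OF lat eta ker AB(1) AB(2) R0(2) R0(1) R_def mbk cc(1) cc(2) dbk k1])
      have ar: "Cc * (real k * R) ^ d * (max Cm 0 * real k ^ Dm) * (Bs * (max C\<phi> 0 * (1 / real k) ^ M))
          = K0 / real k ^ (N' + 1)"
        unfolding K0_def M_def using kpos by (simp add: power_mult_distrib power_add field_simps)
      have "norm (of_nat k ^ N' * Theta_pair \<Lambda> m \<phi> k) = real k ^ N' * norm (Theta_pair \<Lambda> m \<phi> k)"
        by (simp add: norm_mult norm_power)
      also have "\<dots> \<le> real k ^ N' * (K0 / real k ^ (N' + 1))"
        using key ar by (intro mult_left_mono) auto
      also have "\<dots> = K0 / real k" using kpos by (simp add: field_simps)
      finally show ?thesis .
    qed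
    show "((\<lambda>k. of_nat k ^ N' * Theta_pair \<Lambda> m \<phi> k) \<longlongrightarrow> 0) sequentially"
    proof (rule Lim_null_comparison[where g="\<lambda>k. K0 / real k"])
      show "\<forall>\<^sub>F k in sequentially. norm (of_nat k ^ N' * Theta_pair \<Lambda> m \<phi> k) \<le> K0 / real k"
        using bnd by (intro eventually_sequentiallyI[of "max 1 M"]) auto
      show "((\<lambda>k. K0 / real k) \<longlongrightarrow> 0) sequentially" by (rule lim_const_over_n)
    qed
  qed
qed

end
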